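(* Let $X$ be a real Banach space and let $A\subset X\times X^*$ be maximal self-cancelling (i.e. self-cancelling and not properly contained in any self-cancelling subset of $X\times X^*$). Then $A^\vdash$ or $-A^\vdash$ is maximal monotone, where $-B=\{(x,-x^* )\mid (x,x^* )\in B\}$.
   Context: $\langle x,x^*\rangle=x^*(x)$. $A$ is self-cancelling if it is a linear subspace of $X\times X^*$ with $\langle x,x^*\rangle=0$ for all $(x,x^* )\in A$. $B^\vdash=\{(y,y^* )\mid \langle x,y^*\rangle+\langle y,x^*\rangle=0\ \forall (x,x^* )\in B\}$. A set $T\subset X\times X^*$ is monotone if $\langle x-y,x^*-y^*\rangle\ge0$ for all $(x,x^* ),(y,y^* )\in T$, and maximal monotone if it is monotone and not properly contained in any monotone set. *)

theory Defs
  imports "HOL-Analysis.Analysis"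
begin

(* The dual X* of X is the type of bounded linear functionals 'a =>L real; pair x xs = xs(x). *)

definition pair :: "'a::real_normed_vector \<Rightarrow> ('a \<Rightarrow>\<^sub>L real) \<Rightarrow> real" where
  "pair x xs = blinfun_apply xs x"

definition self_cancelling :: "('a::real_normed_vector \<times> ('a \<Rightarrow>\<^sub>L real)) set \<Rightarrow> bool" where
  "self_cancelling A \<longleftrightarrow> subspace A \<and> (\<forall>(x, xs)\<in>A. pair x xs = 0)"

definition max_self_cancelling :: "('a::real_normed_vector \<times> ('a \<Rightarrow>\<^sub>L real)) set \<Rightarrow> bool" where
  "max_self_cancelling A \<longleftrightarrow> self_cancelling A \<and>
     (\<forall>B. self_cancelling B \<and> A \<subseteq> B \<longrightarrow> B = A)"

definition perp :: "('a::real_normed_vector \<times> ('a \<Rightarrow>\<^sub>L real)) set \<Rightarrow> ('a \<times> ('a \<Rightarrow>\<^sub>L real)) set" where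
  "perp B = {(y, ys). \<forall>(x, xs)\<in>B. pair x ys + pair y xs = 0}"

definition monotone_set :: "('a::real_normed_vector \<times> ('a \<Rightarrow>\<^sub>L real)) set \<Rightarrow> bool" where
  "monotone_set T \<longleftrightarrow> (\<forall>(x, xs)\<in>T. \<forall>(y, ys)\<in>T. pair (x - y) (xs - ys) \<ge> 0)"

definition max_monotone :: "('a::real_normed_vector \<times> ('a \<Rightarrow>\<^sub>L real)) set \<Rightarrow> bool" where
  "max_monotone T \<longleftrightarrow> monotone_set T \<and> (\<forall>S. monotone_set S \<and> T \<subseteq> S \<longrightarrow> S = T)"

definition neg_set :: "('a::real_normed_vector \<times> ('a \<Rightarrow>\<^sub>L real)) set \<Rightarrow> ('a \<times> ('a \<Rightarrow>\<^sub>L real)) set" where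
  "neg_set B = {(x, - xs) | x xs. (x, xs) \<in> B}"

end

theory Submission
  imports Defs
begin

definition qf :: "('a::real_normed_vector \<times> ('a \<Rightarrow>\<^sub>L real)) \<Rightarrow> real" where
  "qf z = pair (fst z) (snd z)"

definition bf :: "('a::real_normed_vector \<times> ('a \<Rightarrow>\<^sub>L real)) \<Rightarrow> ('a \<times> ('a \<Rightarrow>\<^sub>L real)) \<Rightarrow> real" where
  "bf z w = pair (fst z) (snd w) + pair (fst w) (snd z)"

lemmas pair_simps = pair_def blinfun.add_left blinfun.add_right blinfun.scaleR_left
  blinfun.scaleR_right blinfun.diff_left blinfun.diff_right blinfun.minus_left blinfun.minus_right
  blinfun.zero_left blinfun.zero_right

lemma qf_add: "qf (z + w) = qf z + qf w + bf z w"
  by (simp add: qf_def bf_def pair_simps)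

lemma qf_diff: "qf (z - w) = qf z + qf w - bf z w"
  by (simp add: qf_def bf_def pair_simps)

lemma qf_scale: "qf (t *\<^sub>R z) = t^2 * qf z"
  by (simp add: qf_def pair_simps power2_eq_square)

lemma bf_scale2: "bf z (t *\<^sub>R w) = t * bf z w"
  by (simp add: bf_def pair_simps algebra_simps)

lemma bf_sym: "bf z w = bf w z"
  by (simp add: bf_def)

lemma perp_iff: "w \<in> perp A \<longleftrightarrow> (\<forall>a\<in>A. bf a w = 0)"
  by (cases w) (auto simp: perp_def bf_def)

lemma sc_iff: "self_cancelling A \<longleftrightarrow> subspace A \<and> (\<forall>z\<in>A. qf z = 0)"
  by (auto simp: self_cancelling_def qf_def)

lemma sc_bf:
  assumes "self_cancelling A" "a \<in> A" "c \<in> A" shows "bf a c = 0"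
proof -
  have s: "subspace A" and q: "\<forall>z\<in>A. qf z = 0" using assms(1) by (auto simp: sc_iff)
  have "a + c \<in> A" using s assms by (simp add: subspace_add)
  then show ?thesis using q assms qf_add[of a c] by simp
qed

lemma bf_add2: "bf z (w + u) = bf z w + bf z u"
  by (simp add: bf_def pair_simps algebra_simps)

lemma bf_zero2: "bf z 0 = 0"
  by (simp add: bf_def pair_simps)

lemma perp_subspace: "subspace (perp A)"
  unfolding subspace_def
  by (auto simp: perp_iff bf_add2 bf_scale2 bf_zero2)

lemma A_sub_perp: "self_cancelling A \<Longrightarrow> A \<subseteq> perp A"
  using sc_bf by (auto simp: perp_iff)

lemma iso_in_A:
  assumes m: "max_self_cancelling A" and z: "z \<in> perp A" and qz: "qf z = 0"
  shows "z \<in> A"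
proof -
  have sc: "self_cancelling A" using m by (simp add: max_self_cancelling_def)
  have s: "subspace A" using sc by (simp add: sc_iff)
  define B where "B = {a + t *\<^sub>R z | a t. a \<in> A}"
  have Bmem: "a + t *\<^sub>R z \<in> B" if "a \<in> A" for a t
    unfolding B_def using that by blast
  have AB: "A \<subseteq> B" using Bmem[of _ 0] by auto
  have "subspace B"
    unfolding subspace_def
  proof (intro conjI ballI allI)
    show "0 \<in> B" using Bmem[OF subspace_0[OF s], of 0] by simp
  next
    fix x y assume "x \<in> B" "y \<in> B"
    then obtain a1 t1 a2 t2 where "x = a1 + t1 *\<^sub>R z" "a1 \<in> A" "y = a2 + t2 *\<^sub>R z" "a2 \<in> A"
      unfolding B_def by blast
    moreover have "a1 + a2 + (t1 + t2) *\<^sub>R z \<in> B"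
      using Bmem subspace_add[OF s] calculation by blast
    ultimately show "x + y \<in> B" by (simp add: algebra_simps)
  next
    fix c x assume "x \<in> B"
    then obtain a1 t1 where "x = a1 + t1 *\<^sub>R z" "a1 \<in> A" unfolding B_def by blast
    moreover have "c *\<^sub>R a1 + (c * t1) *\<^sub>R z \<in> B"
      using Bmem subspace_scale[OF s] calculation by blast
    ultimately show "c *\<^sub>R x \<in> B" by (simp add: algebra_simps)
  qed
  moreover have "\<forall>w\<in>B. qf w = 0"
  proof
    fix w assume "w \<in> B"
    then obtain a t where w: "w = a + t *\<^sub>R z" "a \<in> A" unfolding B_def by blast
    have "bf a z = 0" using z w(2) by (simp add: perp_iff)
    then show "qf w = 0" using w sc qz
      by (simp add: qf_add qf_scale bf_scale2 sc_iff)
  qed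
  ultimately have "self_cancelling B" by (simp add: sc_iff)
  then have "B = A" using m AB by (simp add: max_self_cancelling_def)
  moreover have "z \<in> B" using Bmem[OF subspace_0[OF s], of 1] by simp
  ultimately show ?thesis by simp
qed

lemma sign:
  assumes m: "max_self_cancelling A"
    and z1: "z1 \<in> perp A" and z2: "z2 \<in> perp A" and p: "qf z1 > 0" and n: "qf z2 < 0"
  shows False
proof -
  define \<alpha> where "\<alpha> = qf z1"
  define \<beta> where "\<beta> = bf z1 z2"
  define \<gamma> where "\<gamma> = qf z2"
  define D where "D = \<beta>^2 - 4 * \<alpha> * \<gamma>"
  have D: "D \<ge> 0" using p n unfolding D_def \<alpha>_def \<gamma>_def
    by (smt (verit) mult_pos_neg zero_le_power2)
  define s where "s = sqrt D"
  have s2: "s^2 = D" using D by (simp add: s_def)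
  define t where "t = (- \<beta> + s) / (2 * \<gamma>)"
  have g0: "\<gamma> \<noteq> 0" using n by (simp add: \<gamma>_def)
  have root: "\<alpha> + t * \<beta> + t^2 * \<gamma> = 0"
  proof -
    have "(\<alpha> + t * \<beta> + t^2 * \<gamma>) * (4 * \<gamma>) = s^2 - \<beta>^2 + 4 * \<alpha> * \<gamma>"
      unfolding t_def using g0 by (simp add: field_simps power2_eq_square)
    also have "\<dots> = 0" using s2 D_def by simp
    finally show ?thesis using g0 by simp
  qed
  define z where "z = z1 + t *\<^sub>R z2"
  have zp: "z \<in> perp A" unfolding z_def
    by (rule subspace_add[OF perp_subspace z1 subspace_scale[OF perp_subspace z2]])
  have "qf z = 0" unfolding z_def using root
    by (simp add: qf_add qf_scale bf_scale2 \<alpha>_def \<beta>_def \<gamma>_def algebra_simps)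
  then have zA: "z \<in> A" using iso_in_A[OF m zp] by simp
  have bz: "bf z z2 = 0" using z2 zA by (simp add: perp_iff)
  have "z1 = z - t *\<^sub>R z2" by (simp add: z_def)
  then have "qf z1 = qf z + t^2 * qf z2 - bf z (t *\<^sub>R z2)"
    by (simp add: qf_diff qf_scale)
  also have "\<dots> = t^2 * \<gamma>" using \<open>qf z = 0\<close> bz by (simp add: bf_scale2 \<gamma>_def)
  also have "\<dots> \<le> 0" using n \<gamma>_def by (simp add: mult_nonneg_nonpos)
  finally show False using p by simp
qed


definition NN :: "('a::real_normed_vector \<times> ('a \<Rightarrow>\<^sub>L real)) \<Rightarrow> ('a \<times> ('a \<Rightarrow>\<^sub>L real))" where
  "NN w = (fst w, - snd w)"
lemma NN_NN[simp]: "NN (NN w) = w" by (simp add: NN_def)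
lemma NN_lin: "linear NN"
  by (rule linearI) (auto simp: NN_def algebra_simps)
lemma neg_set_img: "neg_set B = NN ` B"
  unfolding neg_set_def NN_def image_def by force
lemma neg_set_mem: "w \<in> neg_set B \<longleftrightarrow> NN w \<in> B"
  unfolding neg_set_img by (metis NN_NN image_iff)
lemma qf_NN: "qf (NN w) = - qf w"
  by (simp add: NN_def qf_def pair_simps)
lemma neg_sc: "self_cancelling B \<Longrightarrow> self_cancelling (neg_set B)"
proof -
  assume "self_cancelling B"
  then have s: "subspace B" and q: "\<forall>z\<in>B. qf z = 0" by (auto simp: sc_iff)
  have "subspace (NN ` B)" by (rule linear_subspace_image[OF NN_lin s])
  moreover have "\<forall>z\<in>NN ` B. qf z = 0" using q by (auto simp: qf_NN)
  ultimately show ?thesis by (simp add: sc_iff neg_set_img)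
qed

lemma neg_neg: "neg_set (neg_set B) = B"
  by (auto simp: neg_set_mem)

lemma neg_mono_sub: "A \<subseteq> B \<Longrightarrow> neg_set A \<subseteq> neg_set B"
  by (auto simp: neg_set_mem)

lemma neg_msc:
  assumes "max_self_cancelling A" shows "max_self_cancelling (neg_set A)"
proof -
  have sc: "self_cancelling A" using assms by (simp add: max_self_cancelling_def)
  have "B = neg_set A" if "self_cancelling B" "neg_set A \<subseteq> B" for B
  proof -
    have "neg_set B = A" using assms neg_sc[OF that(1)] neg_mono_sub[OF that(2)]
      by (simp add: max_self_cancelling_def neg_neg)
    then show ?thesis using neg_neg by metis
  qed
  then show ?thesis using neg_sc[OF sc] by (auto simp: max_self_cancelling_def)
qed

lemma bf_NN: "bf (NN a) w = - bf a (NN w)"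
  by (simp add: NN_def bf_def pair_simps)

lemma perp_neg: "perp (neg_set A) = neg_set (perp A)"
proof
  show "perp (neg_set A) \<subseteq> neg_set (perp A)"
  proof
    fix w assume w: "w \<in> perp (neg_set A)"
    have "bf a (NN w) = 0" if "a \<in> A" for a
    proof -
      have "NN a \<in> neg_set A" using that by (simp add: neg_set_mem)
      then have "bf (NN a) w = 0" using w by (simp add: perp_iff)
      then show ?thesis by (simp add: bf_NN)
    qed
    then show "w \<in> neg_set (perp A)" by (simp add: neg_set_mem perp_iff)
  qed
next
  show "neg_set (perp A) \<subseteq> perp (neg_set A)"
  proof
    fix w assume w: "w \<in> neg_set (perp A)"
    have "bf b w = 0" if "b \<in> neg_set A" for b
    proof -
      have "NN b \<in> A" using that by (simp add: neg_set_mem)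
      then have "bf (NN b) (NN w) = 0" using w by (simp add: perp_iff neg_set_mem)
      then show ?thesis by (simp add: bf_NN)
    qed
    then show "w \<in> perp (neg_set A)" by (simp add: perp_iff)
  qed
qed

lemma mono_q: "monotone_set S \<Longrightarrow> u \<in> S \<Longrightarrow> v \<in> S \<Longrightarrow> qf (u - v) \<ge> 0"
  unfolding monotone_set_def qf_def by (cases u; cases v) auto

lemma mono_of_q: assumes "(\<And>u v. u \<in> S \<Longrightarrow> v \<in> S \<Longrightarrow> qf (u - v) \<ge> 0)" shows "monotone_set S"
  unfolding monotone_set_def
proof (clarify)
  fix x xs y ys assume "(x, xs) \<in> S" "(y, ys) \<in> S"
  from assms[OF this] show "0 \<le> pair (x - y) (xs - ys)" by (simp add: qf_def)
qed

lemma pos_case: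
  assumes m: "max_self_cancelling A" and pos: "\<forall>z\<in>perp A. qf z \<ge> 0"
  shows "max_monotone (perp A)"
proof -
  have sc: "self_cancelling A" using m by (simp add: max_self_cancelling_def)
  have mono: "monotone_set (perp A)"
  proof (rule mono_of_q)
    fix u v assume "u \<in> perp A" "v \<in> perp A"
    then have "u - v \<in> perp A" by (intro subspace_diff[OF perp_subspace])
    then show "qf (u - v) \<ge> 0" using pos by blast
  qed
  have "S = perp A" if S: "monotone_set S" "perp A \<subseteq> S" for S
  proof
    show "S \<subseteq> perp A"
    proof
      fix w assume w: "w \<in> S"
      have "bf a w = 0" if a: "a \<in> A" for a
      proof -
        have qa: "qf a = 0" using sc a by (simp add: sc_iff)
        have ineq: "qf w - t * bf a w \<ge> 0" for t
        proof -
          have "a \<in> perp A" using a A_sub_perp[OF sc] by blast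
          then have "t *\<^sub>R a \<in> perp A" by (rule subspace_scale[OF perp_subspace])
          then have ta: "t *\<^sub>R a \<in> S" using S by auto
          have "qf (w - t *\<^sub>R a) \<ge> 0" by (rule mono_q[OF S(1) w ta])
          then show ?thesis using qa by (simp add: qf_diff qf_scale bf_scale2 bf_sym)
        qed
        show ?thesis
        proof (rule ccontr)
          assume ne: "bf a w \<noteq> 0"
          have "qf w - ((qf w + 1) / bf a w) * bf a w \<ge> 0" by (rule ineq)
          then show False using ne by simp
        qed
      qed
      then show "w \<in> perp A" by (simp add: perp_iff)
    qed
  qed (use S in auto)
  then show ?thesis using mono by (simp add: max_monotone_def)
qed

theorem lemma6:
  fixes A :: "('a::banach \<times> ('a \<Rightarrow>\<^sub>L real)) set"
  assumes "max_self_cancelling A"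
  shows "max_monotone (perp A) \<or> max_monotone (neg_set (perp A))"
proof (cases "\<forall>z\<in>perp A. qf z \<ge> 0")
  case True
  then show ?thesis using pos_case[OF assms] by simp
next
  case False
  then obtain z1 where z1: "z1 \<in> perp A" "qf z1 < 0" by force
  have neg: "qf z \<le> 0" if "z \<in> perp A" for z
  proof (rule ccontr)
    assume "\<not> qf z \<le> 0"
    then show False using sign[OF assms that z1(1)] z1(2) by simp
  qed
  have "qf z \<ge> 0" if "z \<in> perp (neg_set A)" for z
  proof -
    have "NN z \<in> perp A" using that by (simp add: perp_neg neg_set_mem)
    then show ?thesis using neg[of "NN z"] by (simp add: qf_NN)
  qed
  then have "max_monotone (perp (neg_set A))" using pos_case[OF neg_msc[OF assms]] by simp
  then show ?thesis by (simp add: perp_neg)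
qed
end
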